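(* Let $V=\{v_1,\dots,v_n\}$ be a finite set with $n\geq 2$, let $d$ be a monotone and consistent symmetric set function on $V$, let $\tau\in\mathbb{R}$, and let $v_1,\dots,v_n$ be a lax-back order with threshold $\tau$ for $(V,d)$. Then $$\min\{\tau, d(\{v_n\},V\setminus\{v_n\})\}=\min\{\tau,\lambda_{(V,d)}(v_n,v_{n-1})\}.$$
   Context: A symmetric set function $d$ on a finite set $V$ assigns a real number $d(S,T)$ to every ordered pair $(S,T)$ of disjoint subsets of $V$, such that $d(S,T)=d(T,S)$. It is monotone if $d(S,T')\leq d(S,T)$ whenever $S,T$ are disjoint and $T'\subseteq T$; consistent if for all pairwise disjoint $R,S,T$, $d(S,R)\geq d(T,R)$ implies $d(S,R\cup T)\geq d(S\cup R,T)$. For $s,t\in V$, $\lambda_{(V,d)}(s,t)=\min\{d(S,V\setminus S)\mid s\in S\subseteq V,\ t\notin S\}$. Singletons $\{v\}$ may be written $v$. An ordering $v_1,\dots,v_n$ of $V$ is a lax-back order with threshold $\tau$ for $(V,d)$ if $\min\{\tau,d(v_i,\{v_1,\dots,v_{i-1}\})\}\geq\min\{\tau,d(v_j,\{v_1,\dots,v_{i-1}\})\}$ for all $1\leq i<j\leq n$. *)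

theory Defs
  imports Main "HOL.Real"
begin

text \<open>A set function on a finite ground set V: values d S T for disjoint S, T \<subseteq> V.
  Values outside this domain are irrelevant.\<close>

definition symmetric_set_function :: "'a set \<Rightarrow> ('a set \<Rightarrow> 'a set \<Rightarrow> real) \<Rightarrow> bool" where
  "symmetric_set_function V d \<longleftrightarrow>
     (\<forall>S T. S \<subseteq> V \<longrightarrow> T \<subseteq> V \<longrightarrow> S \<inter> T = {} \<longrightarrow> d S T = d T S)"

definition monotone_sf :: "'a set \<Rightarrow> ('a set \<Rightarrow> 'a set \<Rightarrow> real) \<Rightarrow> bool" where
  "monotone_sf V d \<longleftrightarrow>
     (\<forall>S T T'. S \<subseteq> V \<longrightarrow> T \<subseteq> V \<longrightarrow> S \<inter> T = {} \<longrightarrow> T' \<subseteq> T \<longrightarrow> d S T' \<le> d S T)"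

definition consistent_sf :: "'a set \<Rightarrow> ('a set \<Rightarrow> 'a set \<Rightarrow> real) \<Rightarrow> bool" where
  "consistent_sf V d \<longleftrightarrow>
     (\<forall>R S T. R \<subseteq> V \<longrightarrow> S \<subseteq> V \<longrightarrow> T \<subseteq> V \<longrightarrow>
        R \<inter> S = {} \<longrightarrow> R \<inter> T = {} \<longrightarrow> S \<inter> T = {} \<longrightarrow>
        d S R \<ge> d T R \<longrightarrow> d S (R \<union> T) \<ge> d (S \<union> R) T)"

definition lambda_sf :: "'a set \<Rightarrow> ('a set \<Rightarrow> 'a set \<Rightarrow> real) \<Rightarrow> 'a \<Rightarrow> 'a \<Rightarrow> real" where
  "lambda_sf V d s t = Min {d S (V - S) | S. s \<in> S \<and> S \<subseteq> V \<and> t \<notin> S}"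

text \<open>Ordering v_1..v_n given as a list vs (0-indexed: vs ! 0 = v_1).
  Prefix {v_1,...,v_{i-1}} for 1-indexed i corresponds to set (take i vs) for 0-indexed i.\<close>

definition lax_back_order :: "'a set \<Rightarrow> ('a set \<Rightarrow> 'a set \<Rightarrow> real) \<Rightarrow> real \<Rightarrow> 'a list \<Rightarrow> bool" where
  "lax_back_order V d \<tau> vs \<longleftrightarrow> distinct vs \<and> set vs = V \<and>
     (\<forall>i j. i < j \<longrightarrow> j < length vs \<longrightarrow>
        min \<tau> (d {vs ! i} (set (take i vs))) \<ge> min \<tau> (d {vs ! j} (set (take i vs))))"

end

theory Submission
  imports Defs
begin

lemma symE: "symmetric_set_function V d \<Longrightarrow> S \<subseteq> V \<Longrightarrow> T \<subseteq> V \<Longrightarrow> S \<inter> T = {} \<Longrightarrow> d S T = d T S"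
  unfolding symmetric_set_function_def by blast

lemma monoE: "monotone_sf V d \<Longrightarrow> S \<subseteq> V \<Longrightarrow> T \<subseteq> V \<Longrightarrow> S \<inter> T = {} \<Longrightarrow> T' \<subseteq> T \<Longrightarrow> d S T' \<le> d S T"
  unfolding monotone_sf_def by blast

lemma consE: "consistent_sf V d \<Longrightarrow> R \<subseteq> V \<Longrightarrow> S \<subseteq> V \<Longrightarrow> T \<subseteq> V \<Longrightarrow>
        R \<inter> S = {} \<Longrightarrow> R \<inter> T = {} \<Longrightarrow> S \<inter> T = {} \<Longrightarrow>
        d S R \<ge> d T R \<Longrightarrow> d S (R \<union> T) \<ge> d (S \<union> R) T"
  unfolding consistent_sf_def by blast

lemma step_lemma:
  assumes sym: "symmetric_set_function V d" and mono: "monotone_sf V d"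
    and cons: "consistent_sf V d"
    and sub: "X \<subseteq> V" "Y \<subseteq> V" "M \<subseteq> V" "v \<in> V" "u \<in> X"
    and disj: "X \<inter> Y = {}" "X \<inter> M = {}" "Y \<inter> M = {}" "v \<notin> X" "v \<notin> Y" "v \<notin> M"
    and h1: "min \<tau> (d {u} (X \<union> Y - {u})) \<le> min \<tau> (d X Y)"
    and h2: "min \<tau> (d {v} (X \<union> Y - {u})) \<le> min \<tau> (d {u} (X \<union> Y - {u}))"
  shows "min \<tau> (d {v} (X \<union> M \<union> Y)) \<le> min \<tau> (d (Y \<union> {v}) (X \<union> M))"
proof -
  have e1: "d (Y \<union> {v}) (X \<union> M) = d (X \<union> M) (Y \<union> {v})"
    by (rule symE[OF sym]) (use sub disj in auto)
  have e2: "d (X \<union> M \<union> Y) {v} = d {v} (X \<union> M \<union> Y)"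
    by (rule symE[OF sym]) (use sub disj in auto)
  show ?thesis
  proof (cases "d (X \<union> M) Y \<ge> d {v} Y")
    case True
    have "d (X \<union> M) (Y \<union> {v}) \<ge> d ((X \<union> M) \<union> Y) {v}"
      by (rule consE[OF cons]) (use sub disj True in auto)
    then show ?thesis using e1 e2 by (simp add: min_def)
  next
    case False
    have a: "d {v} Y \<le> d {v} (X \<union> Y - {u})"
      by (rule monoE[OF mono]) (use sub disj in auto)
    have b1: "d X Y = d Y X" by (rule symE[OF sym]) (use sub disj in auto)
    have b2: "d Y X \<le> d Y (X \<union> M)" by (rule monoE[OF mono]) (use sub disj in auto)
    have b3: "d Y (X \<union> M) = d (X \<union> M) Y" by (rule symE[OF sym]) (use sub disj in auto)
    have c: "d (X \<union> M) Y \<le> d (X \<union> M) (Y \<union> {v})" by (rule monoE[OF mono]) (use sub disj in auto)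
    show ?thesis using False a b1 b2 b3 c h1 h2 e1 by (simp add: min_def split: if_splits)
  qed
qed

lemma mem_take: "m \<le> length vs \<Longrightarrow> x \<in> set (take m vs) \<longleftrightarrow> (\<exists>j<m. x = vs ! j)"
  by (auto simp: nth_image[symmetric])

lemma same_side:
  assumes "\<forall>j. a < j \<and> j \<le> b \<longrightarrow> (vs ! j \<in> S) = (vs ! (j-1) \<in> S)"
  shows "a \<le> j \<Longrightarrow> j \<le> b \<Longrightarrow> (vs ! j \<in> S) = (vs ! a \<in> S)"
proof (induction j)
  case 0
  then show ?case by simp
next
  case (Suc j)
  then show ?case using assms by (cases "a = Suc j") auto
qed

lemma main:
  assumes sym: "symmetric_set_function V d" and mono: "monotone_sf V d"
    and cons: "consistent_sf V d" and lax: "lax_back_order V d \<tau> vs"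
  shows "k < length vs \<Longrightarrow> 1 \<le> k \<Longrightarrow> (vs!k \<in> S) \<noteq> (vs!(k-1) \<in> S) \<Longrightarrow>
    min \<tau> (d {vs!k} (set (take k vs))) \<le>
    min \<tau> (d {x \<in> set (take (Suc k) vs). (x \<in> S) = (vs!k \<in> S)}
              {x \<in> set (take (Suc k) vs). (x \<in> S) \<noteq> (vs!k \<in> S)})"
proof (induction k rule: less_induct)
  case (less k)
  have dist: "distinct vs" and setV: "set vs = V"
    and ord: "\<And>i j. i < j \<Longrightarrow> j < length vs \<Longrightarrow>
        min \<tau> (d {vs ! i} (set (take i vs))) \<ge> min \<tau> (d {vs ! j} (set (take i vs)))"
    using lax unfolding lax_back_order_def by auto
  have idx: "\<And>a b. a < length vs \<Longrightarrow> b < length vs \<Longrightarrow> vs ! a = vs ! b \<longleftrightarrow> a = b"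
    using dist nth_eq_iff_index_eq by blast
  define Act where "Act = {i. 1 \<le> i \<and> i < k \<and> (vs!i \<in> S) \<noteq> (vs!(i-1) \<in> S)}"
  show ?case
  proof (cases "Act = {}")
    case True
    have ss: "\<And>j. j \<le> k - 1 \<Longrightarrow> (vs ! j \<in> S) = (vs ! 0 \<in> S)"
      by (rule same_side) (use True in \<open>auto simp: Act_def\<close>)
    have tk: "set (take (Suc k) vs) = insert (vs!k) (set (take k vs))"
      using less.prems by (simp add: take_Suc_conv_app_nth)
    have oth: "\<forall>x \<in> set (take k vs). (x \<in> S) \<noteq> (vs!k \<in> S)"
    proof
      fix x assume "x \<in> set (take k vs)"
      then obtain j where j: "j < k" "x = vs ! j" using mem_take[of k vs x] less.prems by auto
      show "(x \<in> S) \<noteq> (vs!k \<in> S)" using ss[of j] ss[of "k-1"] j less.prems by auto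
    qed
    have o1: "{x \<in> set (take (Suc k) vs). (x \<in> S) = (vs!k \<in> S)} = {vs ! k}"
      using tk oth by auto
    have o2: "{x \<in> set (take (Suc k) vs). (x \<in> S) \<noteq> (vs!k \<in> S)} = set (take k vs)"
      using tk oth by auto
    show ?thesis using o1 o2 by simp
  next
    case False
    have finA: "finite Act" unfolding Act_def by (rule finite_subset[of _ "{..<k}"]) auto
    define i where "i = Max Act"
    have iA: "i \<in> Act" using False finA i_def Max_in by blast
    have imax: "\<And>j. j \<in> Act \<Longrightarrow> j \<le> i" using finA i_def by simp
    have ik: "i < k" "1 \<le> i" "(vs!i \<in> S) \<noteq> (vs!(i-1) \<in> S)" using iA by (auto simp: Act_def)
    have ss: "\<And>j. i \<le> j \<Longrightarrow> j \<le> k - 1 \<Longrightarrow> (vs ! j \<in> S) = (vs ! i \<in> S)"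
    proof (rule same_side)
      show "\<forall>j. i < j \<and> j \<le> k - 1 \<longrightarrow> (vs ! j \<in> S) = (vs ! (j - 1) \<in> S)"
      proof (intro allI impI)
        fix j assume "i < j \<and> j \<le> k - 1"
        then have "j \<notin> Act" using imax by force
        then show "(vs ! j \<in> S) = (vs ! (j - 1) \<in> S)" using \<open>i < j \<and> j \<le> k - 1\<close> ik
          unfolding Act_def by auto
      qed
    qed
    have sk: "(vs!k \<in> S) \<noteq> (vs!i \<in> S)" using ss[of "k-1"] ik less.prems by auto
    have IH: "min \<tau> (d {vs!i} (set (take i vs))) \<le>
      min \<tau> (d {x \<in> set (take (Suc i) vs). (x \<in> S) = (vs!i \<in> S)}
              {x \<in> set (take (Suc i) vs). (x \<in> S) \<noteq> (vs!i \<in> S)})"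
      using less.IH[of i] ik less.prems by auto
    define X where "X = {x \<in> set (take (Suc i) vs). (x \<in> S) = (vs!i \<in> S)}"
    define Y where "Y = {x \<in> set (take (Suc i) vs). (x \<in> S) \<noteq> (vs!i \<in> S)}"
    define M where "M = set (take k vs) - set (take (Suc i) vs)"
    have ti: "set (take (Suc i) vs) = insert (vs!i) (set (take i vs))"
      using less.prems ik by (simp add: take_Suc_conv_app_nth)
    have tk: "set (take (Suc k) vs) = insert (vs!k) (set (take k vs))"
      using less.prems by (simp add: take_Suc_conv_app_nth)
    have nti: "vs ! i \<notin> set (take i vs)" using mem_take[of i vs] idx ik less.prems by auto
    have ntk: "vs ! k \<notin> set (take k vs)" using mem_take[of k vs] idx less.prems by auto
    have sub_ik: "set (take (Suc i) vs) \<subseteq> set (take k vs)"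
      using ik by (simp add: set_take_subset_set_take)
    have mside: "\<forall>x\<in>M. (x \<in> S) = (vs!i \<in> S)"
    proof
      fix x assume "x \<in> M"
      then obtain j where j: "j < k" "x = vs ! j" "x \<notin> set (take (Suc i) vs)"
        using mem_take[of k vs x] less.prems unfolding M_def by auto
      have "\<not> j < Suc i" using j mem_take[of "Suc i" vs x] ik less.prems by auto
      then show "(x \<in> S) = (vs!i \<in> S)" using ss[of j] j by auto
    qed
    have E1: "X \<union> Y - {vs!i} = set (take i vs)" using ti nti unfolding X_def Y_def by auto
    have E2: "X \<union> M \<union> Y = set (take k vs)" using sub_ik unfolding X_def Y_def M_def by auto
    have E3: "Y \<union> {vs!k} = {x \<in> set (take (Suc k) vs). (x \<in> S) = (vs!k \<in> S)}"
      using tk sub_ik mside sk unfolding X_def Y_def M_def by auto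
    have E4: "X \<union> M = {x \<in> set (take (Suc k) vs). (x \<in> S) \<noteq> (vs!k \<in> S)}"
      using tk sub_ik mside sk unfolding X_def Y_def M_def by auto
    have tV: "\<And>m. set (take m vs) \<subseteq> V" using setV set_take_subset by metis
    have "min \<tau> (d {vs!k} (X \<union> M \<union> Y)) \<le> min \<tau> (d (Y \<union> {vs!k}) (X \<union> M))"
    proof (rule step_lemma[OF sym mono cons, where u = "vs!i"])
      show "X \<subseteq> V" "Y \<subseteq> V" "M \<subseteq> V" using tV unfolding X_def Y_def M_def by blast+
      show "vs!k \<in> V" using setV less.prems by auto
      show "vs!i \<in> X" using ti unfolding X_def by auto
      show "X \<inter> Y = {}" "X \<inter> M = {}" "Y \<inter> M = {}" unfolding X_def Y_def M_def by auto
      show "vs!k \<notin> X" "vs!k \<notin> Y" "vs!k \<notin> M" using ntk sub_ik unfolding X_def Y_def M_def by auto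
      show "min \<tau> (d {vs!i} (X \<union> Y - {vs!i})) \<le> min \<tau> (d X Y)"
        using IH E1 unfolding X_def Y_def by simp
      show "min \<tau> (d {vs!k} (X \<union> Y - {vs!i})) \<le> min \<tau> (d {vs!i} (X \<union> Y - {vs!i}))"
        using ord[of i k] E1 ik less.prems by simp
    qed
    then show ?thesis using E2 E3 E4 by simp
  qed
qed

theorem corollary1:
  fixes V :: "'a set" and d :: "'a set \<Rightarrow> 'a set \<Rightarrow> real" and \<tau> :: real and vs :: "'a list"
  assumes "finite V"
    and "card V \<ge> 2"
    and "symmetric_set_function V d"
    and "monotone_sf V d"
    and "consistent_sf V d"
    and "lax_back_order V d \<tau> vs"
  shows "min \<tau> (d {vs ! (length vs - 1)} (V - {vs ! (length vs - 1)}))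
       = min \<tau> (lambda_sf V d (vs ! (length vs - 1)) (vs ! (length vs - 2)))"
proof -
  have dist: "distinct vs" and setV: "set vs = V"
    using assms(6) unfolding lax_back_order_def by auto
  define n where "n = length vs"
  have n2: "n \<ge> 2" using assms(2) distinct_card[OF dist] setV n_def by simp
  define t where "t = vs ! (n - 1)"
  define s where "s = vs ! (n - 2)"
  have idx: "\<And>a b. a < length vs \<Longrightarrow> b < length vs \<Longrightarrow> vs ! a = vs ! b \<longleftrightarrow> a = b"
    using dist nth_eq_iff_index_eq by blast
  have st: "s \<noteq> t" using idx[of "n-2" "n-1"] n2 n_def s_def t_def by auto
  have tV: "t \<in> V" using setV n2 n_def t_def by auto
  have tk: "set vs = insert t (set (take (n-1) vs))"
  proof -
    have "take (Suc (n-1)) vs = take (n-1) vs @ [vs ! (n-1)]"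
      using n2 n_def by (intro take_Suc_conv_app_nth) simp
    moreover have "Suc (n-1) = n" using n2 by simp
    ultimately have eq: "vs = take (n-1) vs @ [t]" using n_def t_def by simp
    have "set vs = set (take (n-1) vs @ [t])" using eq by (rule arg_cong)
    then show ?thesis by simp
  qed
  have ntk: "t \<notin> set (take (n-1) vs)" using mem_take[of "n-1" vs] idx n_def t_def n2 by auto
  have Vt: "set (take (n-1) vs) = V - {t}" using tk ntk setV by auto
  define L where "L = {d S (V - S) | S. t \<in> S \<and> S \<subseteq> V \<and> s \<notin> S}"
  have finL: "finite L" unfolding L_def
    by (rule finite_subset[of _ "(\<lambda>S. d S (V - S)) ` Pow V"]) (use assms(1) in auto)
  have memL: "d {t} (V - {t}) \<in> L" unfolding L_def using tV st by auto
  have bound: "\<And>x. x \<in> L \<Longrightarrow> min \<tau> (d {t} (V - {t})) \<le> min \<tau> x"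
  proof -
    fix x assume "x \<in> L"
    then obtain S where S: "x = d S (V - S)" "t \<in> S" "S \<subseteq> V" "s \<notin> S" unfolding L_def by auto
    have "min \<tau> (d {vs!(n-1)} (set (take (n-1) vs))) \<le>
      min \<tau> (d {x \<in> set (take (Suc (n-1)) vs). (x \<in> S) = (vs!(n-1) \<in> S)}
              {x \<in> set (take (Suc (n-1)) vs). (x \<in> S) \<noteq> (vs!(n-1) \<in> S)})"
      by (rule main[OF assms(3,4,5,6)]) (use n2 n_def S t_def s_def in \<open>auto simp: numeral_2_eq_2\<close>)
    moreover have "take (Suc (n-1)) vs = vs" using n2 n_def by simp
    ultimately show "min \<tau> (d {t} (V - {t})) \<le> min \<tau> x"
      using S Vt setV t_def
    proof -
      assume h: "min \<tau> (d {vs!(n-1)} (set (take (n-1) vs))) \<le>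
        min \<tau> (d {x \<in> set (take (Suc (n-1)) vs). (x \<in> S) = (vs!(n-1) \<in> S)}
              {x \<in> set (take (Suc (n-1)) vs). (x \<in> S) \<noteq> (vs!(n-1) \<in> S)})"
        and h2: "take (Suc (n-1)) vs = vs"
      have e1: "{x \<in> set (take (Suc (n-1)) vs). (x \<in> S) = (vs!(n-1) \<in> S)} = S"
        using h2 S setV t_def by auto
      have e2: "{x \<in> set (take (Suc (n-1)) vs). (x \<in> S) \<noteq> (vs!(n-1) \<in> S)} = V - S"
        using h2 S setV t_def by auto
      show ?thesis using h e1 e2 Vt S t_def by simp
    qed
  qed
  have "Min L \<in> L" using finL memL Min_in by blast
  moreover have "Min L \<le> d {t} (V - {t})" using finL memL by simp
  ultimately have "min \<tau> (d {t} (V - {t})) = min \<tau> (Min L)" using bound[of "Min L"] by (simp add: min_def split: if_splits)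
  then show ?thesis unfolding lambda_sf_def L_def t_def s_def n_def .
qed

end
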